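(* For every $\tau\in\mathbb{Z}$ and every integer $m\geq1$, \[ (-1)^{m\tau}\sum_{|\nu|=m}\frac{1}{\mathfrak{z}_\nu}\,\frac{\{m\tau\nu\}\,\{\nu\}_a}{\{\nu\}}\ \in\ \mathbb{Z}[q^{\pm\frac12},a^{\pm\frac12}]. \] Equivalently, for $\tau\neq0$, $\{m\}\{m\tau\}\mathcal{Z}_m(q,a)\in\mathbb{Z}[q^{\pm\frac12},a^{\pm\frac12}]$.
   Context: $\{n\}_x=x^{n/2}-x^{-n/2}$, $\{n\}=\{n\}_q$; for a partition $\nu=(\nu_1,\dots,\nu_\ell)$ of $m$: $\{\nu\}_x=\prod_i\{\nu_i\}_x$, $\{\nu\}=\{\nu\}_q$, $\{m\tau\nu\}=\prod_i\{m\tau\nu_i\}$; $\mathfrak{z}_\nu=\prod_j j^{k_j}k_j!$ with $k_j$ the number of parts equal to $j$. For $\tau\neq0$, $\mathcal{Z}_m(q,a)=(-1)^{m\tau}\sum_{|\nu|=m}\frac{1}{\mathfrak{z}_\nu}\frac{\{m\nu\tau\}}{\{m\}\{m\tau\}}\frac{\{\nu\}_a}{\{\nu\}}$, so the displayed sum equals $\{m\}\{m\tau\}\mathcal{Z}_m(q,a)$. *)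

theory Defs
  imports Complex_Main "HOL-Library.Multiset"
begin

text \<open>We write q = s^2 and a = t^2, i.e. s = q^(1/2), t = a^(1/2).
  Then {n}_x with x = s^2 is  s^n - s^(-n).\<close>
definition qbr :: "real \<Rightarrow> int \<Rightarrow> real" where
  "qbr s n = s powi n - s powi (-n)"

definition partitions :: "nat \<Rightarrow> nat multiset set" where
  "partitions m = {\<nu>. (\<forall>i\<in>#\<nu>. 0 < i) \<and> sum_mset \<nu> = m}"

definition zee :: "nat multiset \<Rightarrow> nat" where
  "zee \<nu> = (\<Prod>j\<in>set_mset \<nu>. j ^ count \<nu> j * fact (count \<nu> j))"

definition Zsum :: "int \<Rightarrow> nat \<Rightarrow> real \<Rightarrow> real \<Rightarrow> real" where
  "Zsum \<tau> m s t = (-1) powi (int m * \<tau>) *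
     (\<Sum>\<nu>\<in>partitions m. (1 / real (zee \<nu>)) *
        ((\<Prod>i\<in>#\<nu>. qbr s (int m * \<tau> * int i)) * (\<Prod>i\<in>#\<nu>. qbr t (int i))
         / (\<Prod>i\<in>#\<nu>. qbr s (int i))))"

end

theory Submission imports Defs begin

lemma mem_le_sum_mset: "(i::nat) \<in># M \<Longrightarrow> i \<le> sum_mset M"
  by (induction M) auto

lemma size_le_sum_mset: "(\<forall>i\<in>#M. 0 < (i::nat)) \<Longrightarrow> size M \<le> sum_mset M"
  by (induction M) auto

lemma finite_partitions: "finite (partitions m)"
proof -
  have "partitions m \<subseteq> (\<Union>k\<in>{..m}. multisets_of_size {..m} k)"
    unfolding partitions_def multisets_of_size_def
    using mem_le_sum_mset size_le_sum_mset by fastforce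
  moreover have "finite (\<Union>k\<in>{..m}. multisets_of_size {..m} k)" by auto
  ultimately show ?thesis by (rule finite_subset)
qed

lemma sum_count_superset:
  assumes "finite A" "set_mset M \<subseteq> A"
  shows "(\<Sum>j\<in>set_mset M. f j * count M j) = (\<Sum>j\<in>A. f j * count M j)"
  by (rule sum.mono_neutral_left) (use assms in auto)

lemma sum_mset_count: "sum_mset M = (\<Sum>j\<in>set_mset M. j * count M (j::nat))"
proof (induction M)
  case empty then show ?case by simp
next
  case (add a M)
  have "(\<Sum>j\<in>set_mset (add_mset a M). j * count (add_mset a M) j)
      = (\<Sum>j\<in>insert a (set_mset M). j * count M j + (if j = a then a else 0))"
    by (rule sum.cong) auto
  also have "\<dots> = (\<Sum>j\<in>insert a (set_mset M). j * count M j) + a"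
    by (simp add: sum.distrib)
  also have "(\<Sum>j\<in>insert a (set_mset M). j * count M j) = (\<Sum>j\<in>set_mset M. j * count M j)"
    by (rule sum_count_superset[symmetric]) auto
  finally show ?case using add by simp
qed

lemma prod_count_superset:
  assumes "finite A" "set_mset M \<subseteq> A"
  shows "zee M = (\<Prod>j\<in>A. j ^ count M j * fact (count M j))"
  unfolding zee_def by (rule prod.mono_neutral_left) (use assms in \<open>auto simp: not_in_iff\<close>)

lemma zee_add: "zee (add_mset j M) = zee M * (j * count (add_mset j M) j)"
proof -
  let ?A = "insert j (set_mset M)"
  have f: "finite ?A" by simp
  have "zee (add_mset j M) = (\<Prod>i\<in>?A. i ^ count (add_mset j M) i * fact (count (add_mset j M) i))"
    by (rule prod_count_superset) auto
  also have "\<dots> = (j ^ Suc (count M j) * fact (Suc (count M j))) *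
      (\<Prod>i\<in>?A - {j}. i ^ count (add_mset j M) i * fact (count (add_mset j M) i))"
    by (subst prod.remove[of _ j]) auto
  also have "(\<Prod>i\<in>?A - {j}. i ^ count (add_mset j M) i * fact (count (add_mset j M) i))
      = (\<Prod>i\<in>?A - {j}. i ^ count M i * fact (count M i))"
    by (rule prod.cong) auto
  also have "zee M = (j ^ count M j * fact (count M j)) * (\<Prod>i\<in>?A - {j}. i ^ count M i * fact (count M i))"
    by (subst prod_count_superset[OF f]) (auto simp: prod.remove[of _ j])
  ultimately show ?thesis by (simp add: fact_Suc algebra_simps)
qed

lemma zee_pos: "\<forall>i\<in>#M. 0 < i \<Longrightarrow> 0 < zee M"
  unfolding zee_def by (auto intro!: prod_pos)


definition E :: "(nat \<Rightarrow> real) \<Rightarrow> nat \<Rightarrow> real" where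
  "E P m = (\<Sum>\<nu>\<in>partitions m. (1 / real (zee \<nu>)) * (\<Prod>i\<in>#\<nu>. P i))"

lemma partitions_0: "partitions 0 = {{#}}"
proof -
  have "\<nu> = {#}" if "\<forall>i\<in>#\<nu>. 0 < (i::nat)" "sum_mset \<nu> = 0" for \<nu>
    using that by (cases \<nu>) auto
  then show ?thesis unfolding partitions_def by auto
qed

lemma E_0: "E P 0 = 1"
  unfolding E_def partitions_0 by (simp add: zee_def)

lemma E_rec: "real (Suc n) * E P (Suc n) = (\<Sum>k\<le>n. P (Suc k) * E P (n - k))"
proof -
  define w where "w \<nu> = (1 / real (zee \<nu>)) * (\<Prod>i\<in>#\<nu>. P i)" for \<nu>
  have fin: "finite (partitions m)" for m by (rule finite_partitions)
  have "real (Suc n) * E P (Suc n) = (\<Sum>\<nu>\<in>partitions (Suc n). w \<nu> * real (sum_mset \<nu>))"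
    unfolding E_def w_def sum_distrib_left
    by (rule sum.cong) (auto simp: partitions_def)
  also have "\<dots> = (\<Sum>\<nu>\<in>partitions (Suc n). \<Sum>j\<in>set_mset \<nu>. w \<nu> * real j * real (count \<nu> j))"
    by (rule sum.cong) (auto simp: sum_mset_count[of \<nu> for \<nu>] sum_distrib_left mult.assoc)
  also have "\<dots> = (\<Sum>(\<nu>,j)\<in>Sigma (partitions (Suc n)) set_mset. w \<nu> * real j * real (count \<nu> j))"
    by (rule sum.Sigma) (auto simp: fin)
  also have "\<dots> = (\<Sum>(k,\<mu>)\<in>Sigma {..n} (\<lambda>k. partitions (n - k)). P (Suc k) * w \<mu>)"
  proof (rule sym, rule sum.reindex_bij_witness[where i = "\<lambda>(\<nu>,j). (j - 1, \<nu> - {#j#})"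
        and j = "\<lambda>(k,\<mu>). (add_mset (Suc k) \<mu>, Suc k)"])
    fix a assume "a \<in> Sigma {..n} (\<lambda>k. partitions (n - k))"
    then obtain k \<mu> where a: "a = (k, \<mu>)" "k \<le> n" "\<mu> \<in> partitions (n - k)" by auto
    then show "(case (case a of (k, \<mu>) \<Rightarrow> (add_mset (Suc k) \<mu>, Suc k)) of
            (\<nu>, j) \<Rightarrow> (j - 1, \<nu> - {#j#})) = a" by simp
    show "(case a of (k, \<mu>) \<Rightarrow> (add_mset (Suc k) \<mu>, Suc k)) \<in> Sigma (partitions (Suc n)) set_mset"
      using a by (auto simp: partitions_def)
    have pos: "\<forall>i\<in>#\<mu>. 0 < i" using a by (auto simp: partitions_def)
    have zp: "0 < zee \<mu>" by (rule zee_pos[OF pos])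
    show "(case (case a of (k, \<mu>) \<Rightarrow> (add_mset (Suc k) \<mu>, Suc k)) of
          (\<nu>, j) \<Rightarrow> w \<nu> * real j * real (count \<nu> j)) =
         (case a of (k, \<mu>) \<Rightarrow> P (Suc k) * w \<mu>)"
    proof -
      define c where "c = real (Suc k) * real (Suc (count \<mu> (Suc k)))"
      have cp: "c > 0" unfolding c_def by simp
      have "w (add_mset (Suc k) \<mu>) = P (Suc k) * (\<Prod>i\<in>#\<mu>. P i) / (real (zee \<mu>) * c)"
      proof -
        have "real (zee (add_mset (Suc k) \<mu>)) = real (zee \<mu>) * c"
          unfolding c_def zee_add by (simp add: algebra_simps)
        then show ?thesis unfolding w_def by simp
      qed
      then have "w (add_mset (Suc k) \<mu>) * real (Suc k) * real (count (add_mset (Suc k) \<mu>) (Suc k))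
          = P (Suc k) * (\<Prod>i\<in>#\<mu>. P i) / (real (zee \<mu>) * c) * c"
        by (simp add: c_def)
      also have "\<dots> = P (Suc k) * w \<mu>" using cp zp unfolding w_def by (simp add: field_simps)
      finally show ?thesis using a by simp
    qed
  next
    fix b assume "b \<in> Sigma (partitions (Suc n)) set_mset"
    then obtain \<nu> j where b: "b = (\<nu>, j)" "\<nu> \<in> partitions (Suc n)" "j \<in># \<nu>" by auto
    have jp: "0 < j" using b by (auto simp: partitions_def)
    have jle: "j \<le> Suc n" using b mem_le_sum_mset[of j \<nu>] by (auto simp: partitions_def)
    have s: "sum_mset (\<nu> - {#j#}) = Suc n - j"
      using b by (auto simp: partitions_def sum_mset.remove)
    show "(case (case b of (\<nu>, j) \<Rightarrow> (j - 1, \<nu> - {#j#})) of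
          (k, \<mu>) \<Rightarrow> (add_mset (Suc k) \<mu>, Suc k)) = b"
      using b jp by auto
    show "(case b of (\<nu>, j) \<Rightarrow> (j - 1, \<nu> - {#j#})) \<in> Sigma {..n} (\<lambda>k. partitions (n - k))"
      using b jp jle s by (auto simp: partitions_def dest: in_diffD)
  qed
  also have "\<dots> = (\<Sum>k\<le>n. \<Sum>\<mu>\<in>partitions (n - k). P (Suc k) * w \<mu>)"
    by (rule sum.Sigma[symmetric]) (auto simp: fin)
  also have "\<dots> = (\<Sum>k\<le>n. P (Suc k) * E P (n - k))"
    unfolding E_def w_def by (simp add: sum_distrib_left)
  finally show ?thesis .
qed


lemma E_unique:
  assumes R0: "R 0 = 1" and Rrec: "\<And>n. real (Suc n) * R (Suc n) = (\<Sum>k\<le>n. P (Suc k) * R (n - k))"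
  shows "R m = E P m"
proof (induction m rule: less_induct)
  case (less m)
  show ?case
  proof (cases m)
    case 0 then show ?thesis using R0 E_0 by simp
  next
    case (Suc n)
    have "(\<Sum>k\<le>n. P (Suc k) * R (n - k)) = (\<Sum>k\<le>n. P (Suc k) * E P (n - k))"
      by (rule sum.cong) (use less Suc in auto)
    then have "real (Suc n) * R (Suc n) = real (Suc n) * E P (Suc n)"
      using Rrec E_rec by simp
    then show ?thesis using Suc by simp
  qed
qed

lemma E_minus:
  "E (\<lambda>k. P k - x ^ k) m = E P m - x * (case m of 0 \<Rightarrow> 0 | Suc j \<Rightarrow> E P j)"
proof -
  define B where "B = E P"
  define Bm where "Bm j = (case j of 0 \<Rightarrow> 0 | Suc j \<Rightarrow> B j)" for j
  define R where "R j = B j - x * Bm j" for j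
  have a: "(\<Sum>k\<le>n. P (Suc k) * B (n - k)) = real (Suc n) * B (Suc n)" for n
    unfolding B_def by (rule E_rec[symmetric])
  have b: "(\<Sum>k\<le>n. P (Suc k) * Bm (n - k)) = real n * B n" for n
  proof (cases n)
    case 0 then show ?thesis by (simp add: Bm_def)
  next
    case (Suc n')
    have "(\<Sum>k\<le>n. P (Suc k) * Bm (n - k)) = (\<Sum>k\<le>n'. P (Suc k) * Bm (Suc n' - k))"
      using Suc by (simp add: Bm_def)
    also have "\<dots> = (\<Sum>k\<le>n'. P (Suc k) * B (n' - k))"
      by (rule sum.cong) (auto simp: Bm_def Suc_diff_le)
    finally show ?thesis using a[of n'] Suc by simp
  qed
  have c: "(\<Sum>k\<le>n. x ^ Suc k * B (n - k)) - x * (\<Sum>k\<le>n. x ^ Suc k * Bm (n - k)) = x * B n" for n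
  proof (cases n)
    case 0 then show ?thesis by (simp add: Bm_def)
  next
    case (Suc n')
    have 1: "(\<Sum>k\<le>n. x ^ Suc k * B (n - k)) = x * B n + (\<Sum>k\<le>n'. x ^ Suc (Suc k) * B (n' - k))"
      unfolding Suc by (subst sum.atMost_Suc_shift) simp
    have "(\<Sum>k\<le>n. x ^ Suc k * Bm (n - k)) = (\<Sum>k\<le>n'. x ^ Suc k * Bm (Suc n' - k))"
      using Suc by (simp add: Bm_def)
    also have "\<dots> = (\<Sum>k\<le>n'. x ^ Suc k * B (n' - k))"
      by (rule sum.cong) (auto simp: Bm_def Suc_diff_le)
    finally have 2: "x * (\<Sum>k\<le>n. x ^ Suc k * Bm (n - k)) = (\<Sum>k\<le>n'. x ^ Suc (Suc k) * B (n' - k))"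
      by (simp add: sum_distrib_left mult.assoc)
    show ?thesis using 1 2 by simp
  qed
  have "R m = E (\<lambda>k. P k - x ^ k) m"
  proof (rule E_unique)
    show "R 0 = 1" unfolding R_def Bm_def B_def by (simp add: E_0)
    fix n
    have "(\<Sum>k\<le>n. (P (Suc k) - x ^ Suc k) * R (n - k))
        = (\<Sum>k\<le>n. P (Suc k) * B (n - k)) - x * (\<Sum>k\<le>n. P (Suc k) * Bm (n - k))
          - ((\<Sum>k\<le>n. x ^ Suc k * B (n - k)) - x * (\<Sum>k\<le>n. x ^ Suc k * Bm (n - k)))"
    proof -
      have "(\<Sum>k\<le>n. (P (Suc k) - x ^ Suc k) * R (n - k)) = (\<Sum>k\<le>n.
          P (Suc k) * B (n - k) - x * (P (Suc k) * Bm (n - k))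
          - (x ^ Suc k * B (n - k) - x * (x ^ Suc k * Bm (n - k))))"
        unfolding R_def by (rule sum.cong) (auto simp: algebra_simps)
      then show ?thesis by (simp only: sum_subtractf sum_distrib_left)
    qed
    also have "\<dots> = real (Suc n) * B (Suc n) - x * (real n * B n) - x * B n"
      by (simp only: a b c)
    also have "\<dots> = real (Suc n) * R (Suc n)"
      unfolding R_def Bm_def by (simp add: algebra_simps)
    finally show "real (Suc n) * R (Suc n) = (\<Sum>k\<le>n. (P (Suc k) - x ^ Suc k) * R (n - k))" by simp
  qed
  then show ?thesis unfolding R_def Bm_def B_def by (simp split: nat.splits)
qed


definition IL :: "(real \<Rightarrow> real \<Rightarrow> real) \<Rightarrow> bool" where
  "IL f \<longleftrightarrow> (\<exists>c::int \<times> int \<Rightarrow> int. finite {p. c p \<noteq> 0} \<and>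
    (\<forall>s t. 0 < s \<longrightarrow> s \<noteq> 1 \<longrightarrow> 0 < t \<longrightarrow>
       f s t = (\<Sum>p\<in>{p. c p \<noteq> 0}. of_int (c p) * s powi fst p * t powi snd p)))"

lemma IL_I:
  assumes "finite S"
    and "\<And>s t. 0 < s \<Longrightarrow> s \<noteq> 1 \<Longrightarrow> 0 < t \<Longrightarrow>
       f s t = (\<Sum>p\<in>S. of_int (c p) * s powi fst p * t powi snd p)"
  shows "IL f"
proof -
  define c' where "c' p = (if p \<in> S then c p else 0)" for p
  have sub: "{p. c' p \<noteq> 0} \<subseteq> S" unfolding c'_def by auto
  have fin: "finite {p. c' p \<noteq> 0}" using sub assms(1) finite_subset by blast
  show ?thesis unfolding IL_def
  proof (intro exI conjI allI impI)
    show "finite {p. c' p \<noteq> 0}" by (rule fin)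
    fix s t :: real assume h: "0 < s" "s \<noteq> 1" "0 < t"
    have "f s t = (\<Sum>p\<in>S. of_int (c' p) * s powi fst p * t powi snd p)"
      using assms(2)[OF h] by (simp add: c'_def)
    also have "\<dots> = (\<Sum>p\<in>{p. c' p \<noteq> 0}. of_int (c' p) * s powi fst p * t powi snd p)"
      by (rule sum.mono_neutral_right) (use assms(1) sub in auto)
    finally show "f s t = (\<Sum>p\<in>{p. c' p \<noteq> 0}. of_int (c' p) * s powi fst p * t powi snd p)" .
  qed
qed

lemma IL_E:
  assumes "IL f"
  obtains S c where "finite S" "\<And>s t. 0 < s \<Longrightarrow> s \<noteq> 1 \<Longrightarrow> 0 < t \<Longrightarrow>
       f s t = (\<Sum>p\<in>S. of_int (c p) * s powi fst p * t powi snd p)"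
proof -
  from assms obtain c :: "int \<times> int \<Rightarrow> int" where c: "finite {p. c p \<noteq> 0}"
    "\<forall>s t. 0 < s \<longrightarrow> s \<noteq> 1 \<longrightarrow> 0 < t \<longrightarrow>
       f s t = (\<Sum>p\<in>{p. c p \<noteq> 0}. of_int (c p) * s powi fst p * t powi snd p)"
    unfolding IL_def by blast
  show ?thesis by (rule that[of "{p. c p \<noteq> 0}" c]) (use c in auto)
qed

lemma IL_cong:
  assumes "IL f" "\<And>s t. 0 < s \<Longrightarrow> s \<noteq> 1 \<Longrightarrow> 0 < t \<Longrightarrow> f s t = g s t"
  shows "IL g"
proof -
  obtain S c where "finite S" "\<And>s t. 0 < s \<Longrightarrow> s \<noteq> 1 \<Longrightarrow> 0 < t \<Longrightarrow>
       f s t = (\<Sum>p\<in>S. of_int (c p) * s powi fst p * t powi snd p)"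
    using IL_E[OF assms(1)] by metis
  then show ?thesis using assms(2) by (intro IL_I[of S _ c]) auto
qed

lemma IL_const: "IL (\<lambda>s t. of_int k)"
  by (rule IL_I[of "{(0,0)}" _ "\<lambda>_. k"]) auto

lemma IL_mono: "IL (\<lambda>s t. s powi a * t powi b)"
  by (rule IL_I[of "{(a,b)}" _ "\<lambda>_. 1"]) auto

lemma IL_add:
  assumes "IL f" "IL g" shows "IL (\<lambda>s t. f s t + g s t)"
proof -
  obtain S c where S: "finite S" "\<And>s t. 0 < s \<Longrightarrow> s \<noteq> 1 \<Longrightarrow> 0 < t \<Longrightarrow>
       f s t = (\<Sum>p\<in>S. of_int (c p) * s powi fst p * t powi snd p)"
    using IL_E[OF assms(1)] by metis
  obtain T d where T: "finite T" "\<And>s t. 0 < s \<Longrightarrow> s \<noteq> 1 \<Longrightarrow> 0 < t \<Longrightarrow>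
       g s t = (\<Sum>p\<in>T. of_int (d p) * s powi fst p * t powi snd p)"
    using IL_E[OF assms(2)] by metis
  define e where "e p = (if p \<in> S then c p else 0) + (if p \<in> T then d p else 0)" for p
  show ?thesis
  proof (rule IL_I[of "S \<union> T" _ e])
    show "finite (S \<union> T)" using S T by simp
    fix s t :: real assume h: "0 < s" "s \<noteq> 1" "0 < t"
    have 1: "(\<Sum>p\<in>S. of_int (c p) * s powi fst p * t powi snd p)
      = (\<Sum>p\<in>S \<union> T. of_int (if p \<in> S then c p else 0) * s powi fst p * t powi snd p)"
      by (rule sum.mono_neutral_cong_left) (use S T in auto)
    have 2: "(\<Sum>p\<in>T. of_int (d p) * s powi fst p * t powi snd p)
      = (\<Sum>p\<in>S \<union> T. of_int (if p \<in> T then d p else 0) * s powi fst p * t powi snd p)"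
      by (rule sum.mono_neutral_cong_left) (use S T in auto)
    show "f s t + g s t = (\<Sum>p\<in>S \<union> T. of_int (e p) * s powi fst p * t powi snd p)"
      unfolding S(2)[OF h] T(2)[OF h] 1 2 e_def
      by (simp add: sum.distrib[symmetric] algebra_simps)
  qed
qed

lemma IL_scale:
  assumes "IL f" shows "IL (\<lambda>s t. of_int k * f s t)"
proof -
  obtain S c where S: "finite S" "\<And>s t. 0 < s \<Longrightarrow> s \<noteq> 1 \<Longrightarrow> 0 < t \<Longrightarrow>
       f s t = (\<Sum>p\<in>S. of_int (c p) * s powi fst p * t powi snd p)"
    using IL_E[OF assms(1)] by metis
  show ?thesis
    by (rule IL_I[of S _ "\<lambda>p. k * c p"]) (use S in \<open>auto simp: sum_distrib_left algebra_simps\<close>)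
qed

lemma IL_sum:
  assumes "finite A" "\<And>x. x \<in> A \<Longrightarrow> IL (h x)"
  shows "IL (\<lambda>s t. \<Sum>x\<in>A. h x s t)"
  using assms
proof (induction A rule: finite_induct)
  case empty then show ?case using IL_const[of 0] by simp
next
  case (insert x A)
  then show ?case by (simp add: IL_add)
qed

lemma IL_monomul:
  assumes "IL f" shows "IL (\<lambda>s t. s powi a * t powi b * f s t)"
proof -
  obtain S c where S: "finite S" "\<And>s t. 0 < s \<Longrightarrow> s \<noteq> 1 \<Longrightarrow> 0 < t \<Longrightarrow>
       f s t = (\<Sum>p\<in>S. of_int (c p) * s powi fst p * t powi snd p)"
    using IL_E[OF assms(1)] by metis
  define sh where "sh q = (fst q + a, snd q + b)" for q :: "int \<times> int"
  have inj: "inj sh" unfolding sh_def inj_def by auto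
  show ?thesis
  proof (rule IL_I[of "sh ` S" _ "\<lambda>r. c (fst r - a, snd r - b)"])
    show "finite (sh ` S)" using S by simp
    fix s t :: real assume h: "0 < s" "s \<noteq> 1" "0 < t"
    have "(\<Sum>r\<in>sh ` S. of_int (c (fst r - a, snd r - b)) * s powi fst r * t powi snd r)
        = (\<Sum>q\<in>S. of_int (c q) * s powi (fst q + a) * t powi (snd q + b))"
      by (subst sum.reindex) (use inj in \<open>auto simp: sh_def inj_on_def\<close>)
    also have "\<dots> = s powi a * t powi b * f s t"
      unfolding S(2)[OF h] sum_distrib_left
      by (rule sum.cong) (use h in \<open>auto simp: power_int_add algebra_simps\<close>)
    finally show "s powi a * t powi b * f s t =
        (\<Sum>r\<in>sh ` S. of_int (c (fst r - a, snd r - b)) * s powi fst r * t powi snd r)" by simp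
  qed
qed

lemma IL_mult:
  assumes "IL f" "IL g" shows "IL (\<lambda>s t. f s t * g s t)"
proof -
  obtain S c where S: "finite S" "\<And>s t. 0 < s \<Longrightarrow> s \<noteq> 1 \<Longrightarrow> 0 < t \<Longrightarrow>
       f s t = (\<Sum>p\<in>S. of_int (c p) * s powi fst p * t powi snd p)"
    using IL_E[OF assms(1)] by metis
  have "IL (\<lambda>s t. \<Sum>p\<in>S. of_int (c p) * (s powi fst p * t powi snd p * g s t))"
    by (rule IL_sum) (use S assms(2) in \<open>auto intro: IL_scale IL_monomul\<close>)
  then show ?thesis
    by (rule IL_cong) (simp add: S(2) sum_distrib_right mult.assoc)
qed

lemma IL_diff:
  assumes "IL f" "IL g" shows "IL (\<lambda>s t. f s t - g s t)"
proof -
  have "IL (\<lambda>s t. f s t + of_int (-1) * g s t)" by (intro IL_add IL_scale assms)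
  then show ?thesis by (rule IL_cong) simp
qed


fun PL :: "(bool \<times> int \<times> int) list \<Rightarrow> real \<Rightarrow> real \<Rightarrow> nat \<Rightarrow> real" where
  "PL [] s t k = 0"
| "PL ((e,a,b) # L) s t k = (if e then 1 else -1) * (s powi a * t powi b) ^ k + PL L s t k"

lemma E_zero: "E (\<lambda>k. 0) m = (if m = 0 then 1 else 0)"
  by (rule E_unique[symmetric]) auto

lemma IL_E_PL: "IL (\<lambda>s t. E (PL L s t) m)"
proof (induction L arbitrary: m)
  case Nil
  have "IL (\<lambda>s t. of_int (if m = 0 then 1 else 0))" by (rule IL_const)
  then show ?case by (rule IL_cong) (simp add: E_zero[unfolded fun_eq_iff] cong: if_cong)
next
  case (Cons y L)
  obtain e a b where y: "y = (e, a, b)" by (cases y) auto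
  have IH: "IL (\<lambda>s t. E (PL L s t) j)" for j by (rule Cons.IH)
  have X: "IL (\<lambda>s t. s powi a * t powi b)" by (rule IL_mono)
  show ?case
  proof (cases e)
    case False
    have eq: "PL (y # L) s t = (\<lambda>k. PL L s t k - (s powi a * t powi b) ^ k)" for s t
      using False y by auto
    have "IL (\<lambda>s t. E (PL L s t) m - s powi a * t powi b *
          (case m of 0 \<Rightarrow> 0 | Suc j \<Rightarrow> E (PL L s t) j))"
    proof (cases m)
      case 0 then show ?thesis using IH by simp
    next
      case (Suc j) then show ?thesis using IH X by (simp add: IL_diff IL_mult)
    qed
    then show ?thesis unfolding eq E_minus .
  next
    case True
    define Q where "Q s t = PL (y # L) s t" for s t
    have eq: "PL L s t = (\<lambda>k. Q s t k - (s powi a * t powi b) ^ k)" for s t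
      using True y unfolding Q_def by auto
    have rec: "E (Q s t) (Suc j) = E (PL L s t) (Suc j) + s powi a * t powi b * E (Q s t) j" for s t j
      using E_minus[of "Q s t" "s powi a * t powi b" "Suc j"] unfolding eq[symmetric] by simp
    have "IL (\<lambda>s t. E (Q s t) m)"
    proof (induction m)
      case 0 then show ?case using IL_const[of 1] by (simp add: E_0)
    next
      case (Suc j)
      then show ?case unfolding rec using IH X by (simp add: IL_add IL_mult)
    qed
    then show ?thesis unfolding Q_def .
  qed
qed


lemma geo:
  fixes y :: real assumes y: "y \<noteq> 0"
  shows "y powi int n - y powi (- int n) = (y - 1 / y) * (\<Sum>j<n. y powi (2 * int j + 1 - int n))"
proof -
  have t: "y powi (2 * int j + 1 - int n) = y * (y ^ 2) ^ j / y ^ n" for j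
  proof -
    have e: "2 * int j + 1 - int n = int (2 * j + 1) - int n" by simp
    have "y powi (2 * int j + 1 - int n) = y powi int (2 * j + 1) / y powi int n"
      unfolding e by (rule power_int_diff) (use y in auto)
    also have "\<dots> = y ^ (2 * j + 1) / y ^ n" by (simp only: power_int_of_nat)
    also have "y ^ (2 * j + 1) = y * (y ^ 2) ^ j" by (simp add: power_mult[symmetric] mult.commute)
    finally show ?thesis .
  qed
  have "(y - 1 / y) * (\<Sum>j<n. y powi (2 * int j + 1 - int n))
      = (y - 1 / y) * y / y ^ n * (\<Sum>j<n. (y ^ 2) ^ j)"
    unfolding t by (simp add: sum_distrib_left sum_divide_distrib mult.assoc)
  also have "(y - 1 / y) * y = y ^ 2 - 1" using y by (simp add: field_simps power2_eq_square)
  also have "(y ^ 2 - 1) / y ^ n * (\<Sum>j<n. (y ^ 2) ^ j) = ((y ^ 2) ^ n - 1) / y ^ n"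
    by (simp add: power_diff_1_eq)
  also have "\<dots> = y ^ n - 1 / y ^ n"
    using y by (simp add: field_simps power_mult[symmetric] mult.commute power2_eq_square power_mult_distrib)
  finally show ?thesis by (simp add: power_int_minus_divide)
qed


definition Lst :: "int \<Rightarrow> (bool \<times> int \<times> int) list" where
  "Lst N = concat (map (\<lambda>j. [(0 \<le> N, 2 * int j + 1 - int (nat \<bar>N\<bar>), 1),
                              (\<not> 0 \<le> N, 2 * int j + 1 - int (nat \<bar>N\<bar>), -1)]) [0..<nat \<bar>N\<bar>])"

lemma PL_append: "PL (xs @ ys) s t k = PL xs s t k + PL ys s t k"
  by (induction xs s t k rule: PL.induct) auto

lemma PL_concat: "PL (concat (map f xs)) s t k = (\<Sum>x\<leftarrow>xs. PL (f x) s t k)"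
  by (induction xs) (auto simp: PL_append)

lemma powi_pow_swap: "((s::real) powi e) ^ k = (s ^ k) powi e"
  by (simp add: power_int_power power_int_power' mult.commute)

lemma F_eq:
  fixes s t :: real
  assumes s: "0 < s" "s \<noteq> 1" and t: "0 < t" and k: "1 \<le> k"
  shows "qbr s (N * int k) * qbr t (int k) / qbr s (int k) = PL (Lst N) s t k"
proof -
  define n where "n = nat \<bar>N\<bar>"
  define sg :: real where "sg = (if 0 \<le> N then 1 else -1)"
  define y where "y = s ^ k"
  define u where "u = t ^ k"
  define G where "G = (\<Sum>j<n. y powi (2 * int j + 1 - int n))"
  have yp: "0 < y" unfolding y_def using s by simp
  have y1: "y \<noteq> 1"
  proof
    assume "y = 1"
    then have "s ^ k = 1 ^ k" unfolding y_def by simp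
    then have "s = 1" using power_eq_iff_eq_base[of k s 1] s k by simp
    then show False using s by simp
  qed
  have ynz: "y - 1 / y \<noteq> 0"
  proof
    assume "y - 1 / y = 0"
    then have "y * y = 1" using yp by (simp add: field_simps)
    then have "y ^ 2 = 1 ^ 2" by (simp add: power2_eq_square)
    then have "y = 1" using power_eq_iff_eq_base[of 2 y 1] yp by simp
    then show False using y1 by simp
  qed
  have up: "0 < u" unfolding u_def using t by simp
  have PLv: "PL (Lst N) s t k = sg * (u - 1 / u) * G"
  proof -
    have "PL (Lst N) s t k = (\<Sum>j\<leftarrow>[0..<n]. sg * (y powi (2 * int j + 1 - int n)) * u
        - sg * (y powi (2 * int j + 1 - int n)) * (1 / u))"
      unfolding Lst_def PL_concat n_def[symmetric]
      by (rule arg_cong[where f = sum_list], rule map_cong)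
         (auto simp: sg_def y_def u_def power_mult_distrib powi_pow_swap power_int_minus_divide power_one_over power_divide)
    also have "\<dots> = (\<Sum>j<n. sg * (u - 1 / u) * y powi (2 * int j + 1 - int n))"
      by (simp add: sum_set_upt_conv_sum_list_nat[symmetric] atLeast0LessThan algebra_simps)
    finally show ?thesis unfolding G_def by (simp add: sum_distrib_left)
  qed
  have qt: "qbr t (int k) = u - 1 / u" unfolding qbr_def u_def by (simp add: power_int_minus_divide)
  have qs: "qbr s (int k) = y - 1 / y" unfolding qbr_def y_def by (simp add: power_int_minus_divide)
  have qN: "qbr s (N * int k) = sg * ((y - 1 / y) * G)"
  proof -
    have "qbr s (N * int k) = y powi N - y powi (- N)"
      unfolding qbr_def y_def by (simp add: power_int_power mult.commute)
    also have "\<dots> = sg * (y powi int n - y powi (- int n))"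
    proof (cases "0 \<le> N")
      case True then show ?thesis by (simp add: sg_def n_def)
    next
      case False
      then have "N = - int n" by (simp add: n_def)
      then show ?thesis using False by (simp add: sg_def)
    qed
    also have "\<dots> = sg * ((y - 1 / y) * G)" unfolding G_def using geo[of y n] yp by simp
    finally show ?thesis .
  qed
  have "sg * ((y - 1 / y) * G) * (u - 1 / u) / (y - 1 / y)
      = (y - 1 / y) * (sg * (u - 1 / u) * G) / (y - 1 / y)" by (simp only: ac_simps)
  also have "\<dots> = sg * (u - 1 / u) * G" using ynz by simp
  finally show ?thesis unfolding PLv qt qs qN .
qed


lemma prod_mset_fgh:
  "(\<Prod>i\<in>#\<nu>. (f i * g i / h i :: real)) = (\<Prod>i\<in>#\<nu>. f i) * (\<Prod>i\<in>#\<nu>. g i) / (\<Prod>i\<in>#\<nu>. h i)"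
  by (induction \<nu>) auto

theorem lemma4p18:
  fixes \<tau> :: int and m :: nat
  assumes "1 \<le> m"
  shows "\<exists>c :: int \<times> int \<Rightarrow> int. finite {p. c p \<noteq> 0} \<and>
    (\<forall>s t :: real. 0 < s \<longrightarrow> s \<noteq> 1 \<longrightarrow> 0 < t \<longrightarrow>
       Zsum \<tau> m s t = (\<Sum>p\<in>{p. c p \<noteq> 0}. of_int (c p) * s powi fst p * t powi snd p))"
proof -
  define N where "N = int m * \<tau>"
  define sg :: int where "sg = (if even N then 1 else -1)"
  have sgr: "(-1::real) powi N = of_int sg" unfolding sg_def by auto
  have Z: "Zsum \<tau> m s t = of_int sg * E (PL (Lst N) s t) m"
    if h: "0 < s" "s \<noteq> 1" "0 < t" for s t :: real
  proof -
    have "(\<Prod>i\<in>#\<nu>. qbr s (int m * \<tau> * int i)) * (\<Prod>i\<in>#\<nu>. qbr t (int i))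
         / (\<Prod>i\<in>#\<nu>. qbr s (int i)) = (\<Prod>i\<in>#\<nu>. PL (Lst N) s t i)"
      if \<nu>: "\<nu> \<in> partitions m" for \<nu>
    proof -
      have "(\<Prod>i\<in>#\<nu>. qbr s (int m * \<tau> * int i)) * (\<Prod>i\<in>#\<nu>. qbr t (int i))
         / (\<Prod>i\<in>#\<nu>. qbr s (int i))
         = (\<Prod>i\<in>#\<nu>. qbr s (N * int i) * qbr t (int i) / qbr s (int i))"
        by (simp add: prod_mset_fgh N_def)
      also have "\<dots> = (\<Prod>i\<in>#\<nu>. PL (Lst N) s t i)"
        by (rule arg_cong[where f = prod_mset], rule image_mset_cong, rule F_eq)
           (use h \<nu> in \<open>auto simp: partitions_def Suc_le_eq\<close>)
      finally show ?thesis .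
    qed
    then show ?thesis unfolding Zsum_def E_def N_def[symmetric] sgr
      by (simp add: sum_distrib_left)
  qed
  have "IL (\<lambda>s t. of_int sg * E (PL (Lst N) s t) m)" by (intro IL_scale IL_E_PL)
  then have "IL (\<lambda>s t. Zsum \<tau> m s t)" by (rule IL_cong) (simp add: Z)
  then show ?thesis unfolding IL_def .
qed

end
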